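(* Let $\mathcal X$ be a Palais–Smale GKM variety, with its moment graph directed as in the Palais–Smale condition. If $p^v=(p^v_w)_{w\in\mathcal X^T}$ and $q^v=(q^v_w)_{w\in\mathcal X^T}$ are two Knutson–Tao classes corresponding to the same fixed point $v$, then $p^v_w=q^v_w$ for every $w\in\mathcal X^T$.
   Context: Let $T=(\mathbb{C}^* )^n$ and let $\mathcal X$ be a complex projective algebraic variety with an algebraic $T$-action having finitely many fixed points and finitely many one-dimensional orbits, and which is equivariantly formal (a GKM variety). The moment graph has vertex set $\mathcal X^T$ and an edge for each one-dimensional orbit, joining the two fixed points in its closure. When directed, each edge $v\to w$ is labeled $\alpha_{vw}$, the $T$-weight (a linear form in $t_1,\ldots,t_n$) on the tangent line at $v$ of the corresponding orbit closure. Assume that the labels on the edges directed out of any vertex are pairwise linearly independent. $\mathcal X$ is Palais–Smale if the moment graph can be directed so that there is an edge $v\to u$ only if $v$ has more outgoing edges than $u$. By the GKM theorem, $H^*_T(\mathcal X)$ is the ring of tuples $(p_w)_{w\in\mathcal X^T}$ of polynomials in $\mathbb{C}[t_1,\ldots,t_n]$ with $p_{N}-p_{S}\in\langle\alpha\rangle$ for every edge with endpoints $N,S$ and weight $\pm\alpha$. Write $u\succeq_D u'$ if there is a directed path (possibly of length $0$) from $u$ to $u'$. A Knutson–Tao class for $v$ is a class $(p^v_w)_w\in H^*_T(\mathcal X)$ with: (1) $p^v_v=\prod_{v\to w}\alpha_{vw}$, the product over the edges out of $v$; (2) each nonzero $p^v_w$ is homogeneous of degree $\deg p^v_v$; (3)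 $p^v_w=0$ whenever $w\not\succ_D v$. *)

theory Defs
  imports Complex_Main "HOL-Library.Poly_Mapping"
begin

text \<open>Polynomials in the variables t_0, t_1, ... with complex coefficients:
  a finitely supported map from monomials (exponent vectors) to coefficients.\<close>
type_synonym mpoly = "(nat \<Rightarrow>\<^sub>0 nat) \<Rightarrow>\<^sub>0 complex"

definition Const :: "complex \<Rightarrow> mpoly" where
  "Const c = Poly_Mapping.single 0 c"

definition Var :: "nat \<Rightarrow> mpoly" where
  "Var i = Poly_Mapping.single (Poly_Mapping.single i 1) 1"

definition mdeg :: "(nat \<Rightarrow>\<^sub>0 nat) \<Rightarrow> nat" where
  "mdeg m = sum (Poly_Mapping.lookup m) (Poly_Mapping.keys m)"

definition in_vars :: "nat \<Rightarrow> mpoly \<Rightarrow> bool" where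
  "in_vars n p \<longleftrightarrow> (\<forall>m \<in> Poly_Mapping.keys p. Poly_Mapping.keys m \<subseteq> {..<n})"

definition homogeneous :: "nat \<Rightarrow> mpoly \<Rightarrow> bool" where
  "homogeneous d p \<longleftrightarrow> (\<forall>m \<in> Poly_Mapping.keys p. mdeg m = d)"

definition total_degree :: "mpoly \<Rightarrow> nat" where
  "total_degree p = (if Poly_Mapping.keys p = {} then 0 else Max (mdeg ` Poly_Mapping.keys p))"

definition linear_form :: "nat \<Rightarrow> mpoly \<Rightarrow> bool" where
  "linear_form n a \<longleftrightarrow> (\<exists>c. a = (\<Sum>i<n. Const (c i) * Var i))"

definition lin_indep2 :: "mpoly \<Rightarrow> mpoly \<Rightarrow> bool" where
  "lin_indep2 a b \<longleftrightarrow> (\<forall>x y. Const x * a + Const y * b = 0 \<longrightarrow> x = 0 \<and> y = 0)"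

text \<open>A directed moment graph: vertices V (fixed points), edge identifiers Ed
  (one per one-dimensional orbit, oriented), source/target maps, and the label
  of an edge e is the T-weight at its source.\<close>
definition out_edges :: "'e set \<Rightarrow> ('e \<Rightarrow> 'v) \<Rightarrow> 'v \<Rightarrow> 'e set" where
  "out_edges Ed src v = {e \<in> Ed. src e = v}"

definition moment_graph ::
  "nat \<Rightarrow> 'v set \<Rightarrow> 'e set \<Rightarrow> ('e \<Rightarrow> 'v) \<Rightarrow> ('e \<Rightarrow> 'v) \<Rightarrow> ('e \<Rightarrow> mpoly) \<Rightarrow> bool" where
  "moment_graph n V Ed src tgt lab \<longleftrightarrow>
     finite V \<and> finite Ed \<and>
     (\<forall>e\<in>Ed. src e \<in> V \<and> tgt e \<in> V \<and> src e \<noteq> tgt e \<and>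
              linear_form n (lab e) \<and> lab e \<noteq> 0) \<and>
     (\<forall>e\<in>Ed. \<forall>e'\<in>Ed. e \<noteq> e' \<and> src e = src e' \<longrightarrow> lin_indep2 (lab e) (lab e'))"

definition palais_smale :: "'e set \<Rightarrow> ('e \<Rightarrow> 'v) \<Rightarrow> ('e \<Rightarrow> 'v) \<Rightarrow> bool" where
  "palais_smale Ed src tgt \<longleftrightarrow>
     (\<forall>e\<in>Ed. card (out_edges Ed src (tgt e)) < card (out_edges Ed src (src e)))"

definition succeq_D :: "'e set \<Rightarrow> ('e \<Rightarrow> 'v) \<Rightarrow> ('e \<Rightarrow> 'v) \<Rightarrow> 'v \<Rightarrow> 'v \<Rightarrow> bool" where
  "succeq_D Ed src tgt u u' \<longleftrightarrow> (u, u') \<in> {(src e, tgt e) | e. e \<in> Ed}\<^sup>*"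

text \<open>The GKM description of H_T^*(X): tuples of polynomials in C[t_0..t_(n-1)]
  with p_N - p_S in the ideal generated by the weight of each edge.\<close>
definition gkm_class ::
  "nat \<Rightarrow> 'v set \<Rightarrow> 'e set \<Rightarrow> ('e \<Rightarrow> 'v) \<Rightarrow> ('e \<Rightarrow> 'v) \<Rightarrow> ('e \<Rightarrow> mpoly) \<Rightarrow> ('v \<Rightarrow> mpoly) \<Rightarrow> bool" where
  "gkm_class n V Ed src tgt lab p \<longleftrightarrow>
     (\<forall>w\<in>V. in_vars n (p w)) \<and>
     (\<forall>e\<in>Ed. p (src e) - p (tgt e) \<in> {lab e * r | r. in_vars n r})"

definition knutson_tao_class ::
  "nat \<Rightarrow> 'v set \<Rightarrow> 'e set \<Rightarrow> ('e \<Rightarrow> 'v) \<Rightarrow> ('e \<Rightarrow> 'v) \<Rightarrow> ('e \<Rightarrow> mpoly) \<Rightarrow> 'v \<Rightarrow> ('v \<Rightarrow> mpoly) \<Rightarrow> bool" where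
  "knutson_tao_class n V Ed src tgt lab v p \<longleftrightarrow>
     gkm_class n V Ed src tgt lab p \<and>
     p v = (\<Prod>e\<in>out_edges Ed src v. lab e) \<and>
     (\<forall>w\<in>V. p w \<noteq> 0 \<longrightarrow> homogeneous (total_degree (p v)) (p w)) \<and>
     (\<forall>w\<in>V. \<not> succeq_D Ed src tgt w v \<longrightarrow> p w = 0)"

end

theory Submission imports Defs begin

lemma sum_monomials: "f = (\<Sum>m\<in>Poly_Mapping.keys f. Poly_Mapping.single m (Poly_Mapping.lookup f m))"
proof (rule poly_mapping_eqI)
  fix k
  show "Poly_Mapping.lookup f k = Poly_Mapping.lookup (\<Sum>m\<in>Poly_Mapping.keys f. Poly_Mapping.single m (Poly_Mapping.lookup f m)) k"
    by (simp add: lookup_sum lookup_single when_def in_keys_iff)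
qed

lemma Const_mult: "Const a * Const b = Const (a * b)"
  by (simp add: Const_def mult_single)
lemma Const_add: "Const (a + b) = Const a + Const b"
  by (simp add: Const_def single_add)
lemma Const_0[simp]: "Const 0 = 0"
  by (simp add: Const_def)
lemma Const_1[simp]: "Const 1 = 1"
  by (simp add: Const_def)
lemma Const_single: "Const c * Poly_Mapping.single m 1 = Poly_Mapping.single m c"
  by (simp add: Const_def mult_single)
lemma Const_Var: "Const c * Var i = Poly_Mapping.single (Poly_Mapping.single i 1) c"
  by (simp add: Var_def Const_single)

definition ext :: "((nat \<Rightarrow>\<^sub>0 nat) \<Rightarrow> mpoly) \<Rightarrow> mpoly \<Rightarrow> mpoly" where
  "ext h f = (\<Sum>m\<in>Poly_Mapping.keys f. Const (Poly_Mapping.lookup f m) * h m)"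

lemma ext_superset:
  assumes "finite S" "Poly_Mapping.keys f \<subseteq> S"
  shows "ext h f = (\<Sum>m\<in>S. Const (Poly_Mapping.lookup f m) * h m)"
  unfolding ext_def
  by (rule sum.mono_neutral_left) (use assms in \<open>auto simp: in_keys_iff\<close>)

lemma ext_add: "ext h (f + g) = ext h f + ext h g"
proof -
  let ?S = "Poly_Mapping.keys f \<union> Poly_Mapping.keys g"
  have "ext h (f + g) = (\<Sum>m\<in>?S. Const (Poly_Mapping.lookup (f+g) m) * h m)"
    by (rule ext_superset) (use keys_add[of f g] in auto)
  also have "\<dots> = (\<Sum>m\<in>?S. Const (Poly_Mapping.lookup f m) * h m) + (\<Sum>m\<in>?S. Const (Poly_Mapping.lookup g m) * h m)"
    by (simp add: lookup_add Const_add distrib_right sum.distrib)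
  also have "\<dots> = ext h f + ext h g"
    using ext_superset[of ?S f h] ext_superset[of ?S g h] by simp
  finally show ?thesis .
qed

lemma ext_0[simp]: "ext h 0 = 0"
  by (simp add: ext_def)

lemma ext_sum: "ext h (sum F S) = (\<Sum>x\<in>S. ext h (F x))"
  by (induction S rule: infinite_finite_induct) (auto simp: ext_add)

lemma ext_single: "ext h (Poly_Mapping.single m c) = Const c * h m"
  by (simp add: ext_def)

lemma ext_mult:
  assumes hadd: "\<And>a b. h (a + b) = h a * h b"
  shows "ext h (f * g) = ext h f * ext h g"
proof -
  let ?F = "Poly_Mapping.keys f" and ?G = "Poly_Mapping.keys g"
  let ?lf = "Poly_Mapping.lookup f" and ?lg = "Poly_Mapping.lookup g"
  have "f * g = (\<Sum>a\<in>?F. Poly_Mapping.single a (?lf a)) * (\<Sum>b\<in>?G. Poly_Mapping.single b (?lg b))"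
    using sum_monomials[of f] sum_monomials[of g] by simp
  also have "\<dots> = (\<Sum>a\<in>?F. \<Sum>b\<in>?G. Poly_Mapping.single (a+b) (?lf a * ?lg b))"
    by (simp add: sum_product mult_single)
  finally have "ext h (f * g) = (\<Sum>a\<in>?F. \<Sum>b\<in>?G. Const (?lf a) * h a * (Const (?lg b) * h b))"
    by (simp add: ext_sum ext_single hadd Const_mult[symmetric] algebra_simps)
  also have "\<dots> = ext h f * ext h g"
    by (simp add: ext_def sum_product)
  finally show ?thesis .
qed

definition hsub :: "(nat \<Rightarrow> mpoly) \<Rightarrow> (nat \<Rightarrow>\<^sub>0 nat) \<Rightarrow> mpoly" where
  "hsub s m = (\<Prod>i\<in>Poly_Mapping.keys m. s i ^ Poly_Mapping.lookup m i)"

lemma hsub_superset: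
  assumes "finite S" "Poly_Mapping.keys m \<subseteq> S"
  shows "hsub s m = (\<Prod>i\<in>S. s i ^ Poly_Mapping.lookup m i)"
  unfolding hsub_def
  by (rule prod.mono_neutral_left) (use assms in \<open>auto simp: in_keys_iff\<close>)

lemma hsub_add: "hsub s (a + b) = hsub s a * hsub s b"
proof -
  let ?S = "Poly_Mapping.keys a \<union> Poly_Mapping.keys b"
  have "hsub s (a + b) = (\<Prod>i\<in>?S. s i ^ Poly_Mapping.lookup (a+b) i)"
    by (rule hsub_superset) (use keys_add[of a b] in auto)
  also have "\<dots> = (\<Prod>i\<in>?S. s i ^ Poly_Mapping.lookup a i) * (\<Prod>i\<in>?S. s i ^ Poly_Mapping.lookup b i)"
    by (simp add: lookup_add power_add prod.distrib)
  also have "\<dots> = hsub s a * hsub s b"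
    using hsub_superset[of ?S a s] hsub_superset[of ?S b s] by simp
  finally show ?thesis .
qed

lemma Var_power: "Var i ^ k = Poly_Mapping.single (Poly_Mapping.single i k) 1"
  by (induction k) (simp_all add: Var_def mult_single single_add[symmetric] add.commute)

lemma prod_single: "(\<Prod>i\<in>S. Poly_Mapping.single (F i) (1::complex)) = Poly_Mapping.single (\<Sum>i\<in>S. F i) 1"
  by (induction S rule: infinite_finite_induct) (simp_all add: mult_single)

lemma mon_eq: "Poly_Mapping.single m (1::complex) = hsub Var m"
proof -
  have "hsub Var m = Poly_Mapping.single (\<Sum>i\<in>Poly_Mapping.keys m. Poly_Mapping.single i (Poly_Mapping.lookup m i)) 1"
    by (simp add: hsub_def Var_power prod_single)
  then show ?thesis using sum_monomials[of m] by simp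
qed

lemma dvd_diff_prod:
  fixes l :: "'a::comm_ring_1"
  assumes "\<And>i. i \<in> S \<Longrightarrow> l dvd x i - y i"
  shows "l dvd (\<Prod>i\<in>S. x i ^ k i) - (\<Prod>i\<in>S. y i ^ k i)"
proof -
  have mult: "l dvd a1 * a2 - b1 * b2" if "l dvd a1 - b1" "l dvd a2 - b2" for a1 a2 b1 b2 :: 'a
  proof -
    have "a1 * a2 - b1 * b2 = a1 * (a2 - b2) + (a1 - b1) * b2" by (simp add: algebra_simps)
    then show ?thesis using that by (metis dvd_add dvd_mult dvd_mult2)
  qed
  have pw: "l dvd a ^ j - b ^ j" if "l dvd a - b" for a b :: 'a and j
    by (induction j) (simp_all add: mult that)
  show ?thesis using assms
    by (induction S rule: infinite_finite_induct) (simp_all add: mult pw)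
qed

lemma ext_cong:
  assumes "\<And>i. l dvd Var i - s i"
  shows "l dvd f - ext (hsub s) f"
proof -
  have "f - ext (hsub s) f = (\<Sum>m\<in>Poly_Mapping.keys f. Const (Poly_Mapping.lookup f m) * (hsub Var m - hsub s m))"
    apply (subst (1) sum_monomials[of f])
    apply (simp add: ext_def right_diff_distrib sum_subtractf mon_eq[symmetric] Const_single)
    done
  moreover have "l dvd hsub Var m - hsub s m" for m
    unfolding hsub_def by (rule dvd_diff_prod) (use assms in auto)
  ultimately show ?thesis by (simp add: dvd_sum)
qed

lemma hsub_Var1: "hsub s (Poly_Mapping.single i 1) = s i"
  by (simp add: hsub_def)
lemma hsub_Var1': "hsub s (Poly_Mapping.single i (Suc 0)) = s i"
  by (simp add: hsub_def)

lemma ext_lin: "ext (hsub s) (\<Sum>i<n. Const (b i) * Var i) = (\<Sum>i<n. Const (b i) * s i)"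
  by (simp add: ext_sum Const_Var ext_single hsub_Var1 hsub_Var1')

lemma pivot:
  assumes "linear_form n l" "l \<noteq> 0"
  shows "\<exists>\<sigma>. (\<forall>f g. \<sigma> (f * g) = \<sigma> f * \<sigma> g) \<and> (\<forall>f. l dvd f - \<sigma> f) \<and> \<sigma> l = 0 \<and>
     (\<forall>l'. linear_form n l' \<longrightarrow> (\<exists>x. \<sigma> l' = l' - Const x * l))"
proof -
  obtain c where c: "l = (\<Sum>i<n. Const (c i) * Var i)" using assms(1) linear_form_def by blast
  obtain j where j: "j < n" "c j \<noteq> 0"
  proof (rule ccontr)
    assume "\<not> thesis"
    then have "\<forall>i<n. c i = 0" using that by blast
    then have "l = 0" using c by simp
    then show False using assms(2) by simp
  qed
  define s where "s i = (if i = j then Var j - Const (1 / c j) * l else Var i)" for i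
  have m: "\<forall>f g. ext (hsub s) (f * g) = ext (hsub s) f * ext (hsub s) g"
    by (simp add: ext_mult hsub_add)
  have d: "\<forall>f. l dvd f - ext (hsub s) f"
    by (intro allI ext_cong) (simp add: s_def)
  have lin: "ext (hsub s) (\<Sum>i<n. Const (b i) * Var i) = (\<Sum>i<n. Const (b i) * Var i) - Const (b j / c j) * l" for b
  proof -
    have "ext (hsub s) (\<Sum>i<n. Const (b i) * Var i) = (\<Sum>i<n. Const (b i) * Var i - (if i = j then Const (b j / c j) * l else 0))"
      unfolding ext_lin
      by (rule sum.cong) (auto simp: s_def right_diff_distrib Const_mult mult.assoc[symmetric])
    also have "\<dots> = (\<Sum>i<n. Const (b i) * Var i) - Const (b j / c j) * l"
      by (simp add: sum_subtractf j)
    finally show ?thesis .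
  qed
  have z: "ext (hsub s) l = 0"
    using lin[of c] j by (simp add: c[symmetric])
  have "\<exists>x. ext (hsub s) l' = l' - Const x * l" if "linear_form n l'" for l'
    using that lin unfolding linear_form_def by blast
  with m d z show ?thesis by blast
qed

lemma lin_prime:
  assumes "linear_form n l" "l \<noteq> 0" "l dvd g * h"
  shows "l dvd g \<or> l dvd h"
proof -
  obtain \<sigma> where m: "\<forall>f g. \<sigma> (f * g) = \<sigma> f * \<sigma> g" and d: "\<forall>f. l dvd f - \<sigma> f"
     and z: "\<sigma> l = 0"
    using pivot[OF assms(1,2)] by blast
  obtain t where "g * h = l * t" using assms(3) by blast
  then have "\<sigma> (g * h) = \<sigma> l * \<sigma> t" using m by simp
  then have "\<sigma> g * \<sigma> h = 0" using m z by simp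
  then have "\<sigma> g = 0 \<or> \<sigma> h = 0" by simp
  then show ?thesis using d[rule_format, of g] d[rule_format, of h] by auto
qed

lemma lin_nodvd:
  assumes "linear_form n l" "l \<noteq> 0" "linear_form n l'" "lin_indep2 l l'"
  shows "\<not> l dvd l'"
proof
  assume "l dvd l'"
  obtain \<sigma> where m: "\<forall>f g. \<sigma> (f * g) = \<sigma> f * \<sigma> g" 
     and z: "\<sigma> l = 0" and li: "\<forall>l'. linear_form n l' \<longrightarrow> (\<exists>x. \<sigma> l' = l' - Const x * l)"
    using pivot[OF assms(1,2)] by blast
  obtain t where "l' = l * t" using \<open>l dvd l'\<close> by blast
  then have "\<sigma> l' = 0" using m z by simp
  moreover obtain x where "\<sigma> l' = l' - Const x * l" using li assms(3) by blast
  ultimately have "Const x * l + Const (-1) * l' = 0"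
    by (simp add: Const_def single_uminus)
  then show False using assms(4) unfolding lin_indep2_def by (metis neg_equal_0_iff_equal one_neq_zero)
qed

lemma mdeg_superset:
  assumes "finite S" "Poly_Mapping.keys m \<subseteq> S"
  shows "mdeg m = sum (Poly_Mapping.lookup m) S"
  unfolding mdeg_def
  by (rule sum.mono_neutral_left) (use assms in \<open>auto simp: in_keys_iff\<close>)

lemma mdeg_add: "mdeg (a + b) = mdeg a + mdeg b"
proof -
  let ?S = "Poly_Mapping.keys a \<union> Poly_Mapping.keys b"
  have "mdeg (a + b) = sum (Poly_Mapping.lookup (a+b)) ?S"
    by (rule mdeg_superset) (use keys_add[of a b] in auto)
  also have "\<dots> = sum (Poly_Mapping.lookup a) ?S + sum (Poly_Mapping.lookup b) ?S"
    by (simp add: lookup_add sum.distrib)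
  also have "\<dots> = mdeg a + mdeg b"
    using mdeg_superset[of ?S a] mdeg_superset[of ?S b] by simp
  finally show ?thesis .
qed

lemma mdeg_0[simp]: "mdeg 0 = 0"
  by (simp add: mdeg_def)

lemma mdeg_single1: "mdeg (Poly_Mapping.single i (1::nat)) = 1"
  by (simp add: mdeg_def)

lemma lin_keys:
  assumes "linear_form n l" "m \<in> Poly_Mapping.keys l"
  shows "mdeg m = 1"
proof -
  obtain c where c: "l = (\<Sum>i<n. Const (c i) * Var i)" using assms(1) linear_form_def by blast
  have "m \<in> (\<Union>i<n. Poly_Mapping.keys (Const (c i) * Var i))"
    using keys_sum[of "\<lambda>i. Const (c i) * Var i" "{..<n}"] assms(2) c by auto
  then obtain i where "m \<in> Poly_Mapping.keys (Poly_Mapping.single (Poly_Mapping.single i (1::nat)) (c i))"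
    unfolding Const_Var by blast
  then have "m = Poly_Mapping.single i 1" by (simp split: if_splits)
  then show ?thesis using mdeg_single1[of i] by simp
qed

lemma mult_keys_ge:
  assumes "\<forall>m\<in>Poly_Mapping.keys P. mdeg m = k" "m \<in> Poly_Mapping.keys (P * g)"
  shows "k \<le> mdeg m"
proof -
  obtain a b where "m = a + b" "a \<in> Poly_Mapping.keys P"
    using keys_mult[of P g] assms(2) by blast
  then show ?thesis using assms(1) by (simp add: mdeg_add)
qed

lemma prod_keys:
  assumes "finite S" "\<forall>e\<in>S. linear_form n (L e)"
  shows "\<forall>m\<in>Poly_Mapping.keys (\<Prod>e\<in>S. L e). mdeg m = card S"
  using assms
proof (induction S rule: finite_induct)
  case empty
  then show ?case by simp
next
  case (insert x S)
  show ?case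
  proof
    fix m assume "m \<in> Poly_Mapping.keys (prod L (insert x S))"
    then have "m \<in> Poly_Mapping.keys (L x * prod L S)" using insert by simp
    then obtain a b where "m = a + b" "a \<in> Poly_Mapping.keys (L x)" "b \<in> Poly_Mapping.keys (prod L S)"
      using keys_mult[of "L x" "prod L S"] by blast
    then show "mdeg m = card (insert x S)"
      using insert lin_keys[of n "L x" a] by (simp add: mdeg_add)
  qed
qed

lemma lin_not_unit:
  assumes "linear_form n l" "l dvd 1"
  shows False
proof -
  obtain t where t: "1 = l * t" using assms(2) by blast
  have "0 \<in> Poly_Mapping.keys (l * t)" by (simp flip: t)
  then have "1 \<le> mdeg (0::nat\<Rightarrow>\<^sub>0nat)"
    using mult_keys_ge[of l 1 0 t] lin_keys[OF assms(1)] by blast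
  then show False by simp
qed

lemma lin_nodvd_prod:
  assumes "linear_form n l" "l \<noteq> 0" "finite S" "\<forall>e\<in>S. \<not> l dvd L e"
  shows "\<not> l dvd (\<Prod>e\<in>S. L e)"
  using assms(3,4)
proof (induction S rule: finite_induct)
  case empty
  then show ?case using lin_not_unit[OF assms(1)] by auto
next
  case (insert x S)
  then show ?case using lin_prime[OF assms(1,2), of "L x" "prod L S"] by auto
qed

lemma prod_dvd:
  assumes "finite S" "\<forall>e\<in>S. linear_form n (L e) \<and> L e \<noteq> 0"
    "\<forall>e\<in>S. \<forall>e'\<in>S. e \<noteq> e' \<longrightarrow> \<not> L e dvd L e'" "\<forall>e\<in>S. L e dvd f"
  shows "(\<Prod>e\<in>S. L e) dvd f"
  using assms
proof (induction S rule: finite_induct)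
  case empty
  then show ?case by simp
next
  case (insert x S)
  then obtain g where g: "f = prod L S * g" by blast
  have "\<not> L x dvd prod L S"
    using lin_nodvd_prod[of n "L x" S L] insert.hyps insert.prems by (metis insert_iff)
  moreover have "L x dvd prod L S * g" using insert g by simp
  ultimately have "L x dvd g" using lin_prime[of n "L x" "prod L S" g] insert by auto
  then show ?case using g insert by (simp add: mult_dvd_mono)
qed

lemma path_card:
  assumes ps: "palais_smale Ed src tgt"
    and "(u, u') \<in> {(src e, tgt e) | e. e \<in> Ed}\<^sup>*"
  shows "u = u' \<or> card (out_edges Ed src u') < card (out_edges Ed src u)"
  using assms(2)
proof (induction rule: rtrancl_induct)
  case base
  then show ?case by simp
next
  case (step y z)
  then obtain e where "e \<in> Ed" "y = src e" "z = tgt e" by blast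
  then have "card (out_edges Ed src z) < card (out_edges Ed src y)"
    using ps unfolding palais_smale_def by auto
  then show ?case using step by auto
qed

theorem mainTheorem4:
  fixes n :: nat and V :: "'v set" and Ed :: "'e set"
    and src tgt :: "'e \<Rightarrow> 'v" and lab :: "'e \<Rightarrow> mpoly"
    and v :: 'v and p q :: "'v \<Rightarrow> mpoly"
  assumes "moment_graph n V Ed src tgt lab"
    and "palais_smale Ed src tgt"
    and "v \<in> V"
    and "knutson_tao_class n V Ed src tgt lab v p"
    and "knutson_tao_class n V Ed src tgt lab v q"
  shows "\<forall>w\<in>V. p w = q w"
proof (rule ccontr)
  assume "\<not> (\<forall>w\<in>V. p w = q w)"
  then obtain w0 where w0: "w0 \<in> V" "p w0 - q w0 \<noteq> 0" by auto
  define out where "out u = out_edges Ed src u" for u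
  have mg: "finite Ed" "\<forall>e\<in>Ed. src e \<in> V \<and> tgt e \<in> V \<and> src e \<noteq> tgt e \<and> linear_form n (lab e) \<and> lab e \<noteq> 0"
    "\<forall>e\<in>Ed. \<forall>e'\<in>Ed. e \<noteq> e' \<and> src e = src e' \<longrightarrow> lin_indep2 (lab e) (lab e')"
    using assms(1) unfolding moment_graph_def by auto
  have fin_out: "finite (out u)" for u using mg(1) by (simp add: out_def out_edges_def)
  have out_sub: "out u \<subseteq> Ed" for u by (auto simp: out_def out_edges_def)
  have pE: "\<forall>e\<in>Ed. p (src e) - p (tgt e) \<in> {lab e * r |r. in_vars n r}"
   and pv: "p v = (\<Prod>e\<in>out_edges Ed src v. lab e)"
   and pH: "\<forall>w\<in>V. p w \<noteq> 0 \<longrightarrow> homogeneous (total_degree (p v)) (p w)"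
   and pZ: "\<forall>w\<in>V. \<not> succeq_D Ed src tgt w v \<longrightarrow> p w = 0"
    using assms(4) unfolding knutson_tao_class_def gkm_class_def by auto
  have qE: "\<forall>e\<in>Ed. q (src e) - q (tgt e) \<in> {lab e * r |r. in_vars n r}"
   and qv: "q v = (\<Prod>e\<in>out_edges Ed src v. lab e)"
   and qH: "\<forall>w\<in>V. q w \<noteq> 0 \<longrightarrow> homogeneous (total_degree (q v)) (q w)"
   and qZ: "\<forall>w\<in>V. \<not> succeq_D Ed src tgt w v \<longrightarrow> q w = 0"
    using assms(5) unfolding knutson_tao_class_def gkm_class_def by auto
  have pqv: "p v = q v" using pv qv by simp
  define D where "D = total_degree (p v)"
  have Dq: "total_degree (q v) = D" using pqv D_def by simp
  have keys_pv: "\<forall>m\<in>Poly_Mapping.keys (p v). mdeg m = card (out v)"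
  proof -
    have "\<forall>e\<in>out v. linear_form n (lab e)" using mg(2) out_sub[of v] by (meson subsetD)
    then show ?thesis using pv prod_keys[of "out v" n lab] fin_out unfolding out_def by simp
  qed
  have D_le: "D \<le> card (out v)"
  proof (cases "Poly_Mapping.keys (p v) = {}")
    case True then show ?thesis by (simp add: D_def total_degree_def)
  next
    case False then show ?thesis using keys_pv by (simp add: D_def total_degree_def)
  qed
  obtain w where w: "w \<in> V" "p w - q w \<noteq> 0"
    and wmin: "\<And>w'. w' \<in> V \<and> p w' - q w' \<noteq> 0 \<Longrightarrow> card (out w) \<le> card (out w')"
    using ex_has_least_nat[of "\<lambda>w. w \<in> V \<and> p w - q w \<noteq> 0" w0 "\<lambda>w. card (out w)"] w0 by auto
  have "w \<noteq> v" using w pqv by auto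
  moreover have "succeq_D Ed src tgt w v"
  proof (rule ccontr)
    assume "\<not> succeq_D Ed src tgt w v"
    then have "p w = 0" "q w = 0" using pZ qZ w(1) by auto
    then show False using w by simp
  qed
  ultimately have lt: "card (out v) < card (out w)"
    using path_card[OF assms(2), of w v] unfolding succeq_D_def out_def by simp
  have dv: "lab e dvd p w - q w" if e: "e \<in> out w" for e
  proof -
    have eE: "e \<in> Ed" "src e = w" using e by (auto simp: out_def out_edges_def)
    then have tV: "tgt e \<in> V" using mg(2) by auto
    have "card (out (tgt e)) < card (out w)"
      using assms(2) eE unfolding palais_smale_def out_def by auto
    then have z: "p (tgt e) - q (tgt e) = 0" using wmin[of "tgt e"] tV by (meson not_le)
    obtain a where a: "p w - p (tgt e) = lab e * a" using pE eE by blast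
    obtain b where b: "q w - q (tgt e) = lab e * b" using qE eE by blast
    have "p w - q w = (p w - p (tgt e)) - (q w - q (tgt e)) + (p (tgt e) - q (tgt e))"
      by (simp add: algebra_simps)
    also have "\<dots> = lab e * (a - b)" using a b z by (simp add: algebra_simps)
    finally show ?thesis by simp
  qed
  have "(\<Prod>e\<in>out w. lab e) dvd p w - q w"
  proof (rule prod_dvd[where n = n])
    show "finite (out w)" by (rule fin_out)
    show "\<forall>e\<in>out w. linear_form n (lab e) \<and> lab e \<noteq> 0" using mg(2) out_sub[of w] by (meson subsetD)
    show "\<forall>e\<in>out w. \<forall>e'\<in>out w. e \<noteq> e' \<longrightarrow> \<not> lab e dvd lab e'"
    proof (intro ballI impI)
      fix e e' assume ee: "e \<in> out w" "e' \<in> out w" "e \<noteq> e'"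
      then have "e \<in> Ed" "e' \<in> Ed" "src e = src e'" by (auto simp: out_def out_edges_def)
      then have "linear_form n (lab e)" "lab e \<noteq> 0" "linear_form n (lab e')" "lin_indep2 (lab e) (lab e')"
        using mg(2,3) ee(3) by auto
      then show "\<not> lab e dvd lab e'" by (rule lin_nodvd)
    qed
    show "\<forall>e\<in>out w. lab e dvd p w - q w" using dv by blast
  qed
  then obtain g where g: "p w - q w = (\<Prod>e\<in>out w. lab e) * g" by blast
  obtain m where m: "m \<in> Poly_Mapping.keys (p w - q w)" using w(2) by fastforce
  have keysP: "\<forall>m\<in>Poly_Mapping.keys (\<Prod>e\<in>out w. lab e). mdeg m = card (out w)"
  proof -
    have "\<forall>e\<in>out w. linear_form n (lab e)" using mg(2) out_sub[of w] by (meson subsetD)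
    then show ?thesis using prod_keys[of "out w" n lab] fin_out by simp
  qed
  have ge: "card (out w) \<le> mdeg m" using mult_keys_ge[OF keysP, of m g] m g by simp
  have "mdeg m = D"
  proof -
    have "m \<in> Poly_Mapping.keys (p w) \<or> m \<in> Poly_Mapping.keys (q w)" using m keys_diff[of "p w" "q w"] by auto
    then show ?thesis
    proof
      assume h: "m \<in> Poly_Mapping.keys (p w)"
      then have "p w \<noteq> 0" by auto
      then show ?thesis using pH w(1) h unfolding homogeneous_def D_def by blast
    next
      assume h: "m \<in> Poly_Mapping.keys (q w)"
      then have "q w \<noteq> 0" by auto
      then show ?thesis using qH w(1) h Dq unfolding homogeneous_def by blast
    qed
  qed
  then show False using ge D_le lt by simp
qed

end
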